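(* Let $\mathbf{s}=(s_1,\ldots,s_r)$ and $\mathbf{t}=(t_1,\ldots,t_r)$ be $r$-tuples of positive integers such that $s_1+\cdots+s_r\ge t_1+\cdots+t_r$ and there is an index $l$ with $0\le l\le r-1$ such that $s_i\le t_i$ for $1\le i\le l$ and $s_i\ge t_i$ for $l+1\le i\le r$. Then for every positive integer $n$, $H_n(s_1,\ldots,s_r)\le H_n(t_1,\ldots,t_r)$. In particular this holds whenever $s_i\ge t_i$ for all $i$.
   Context: $H_n(s_1,\ldots,s_r)=\sum_{1\le k_1<k_2<\cdots<k_r\le n}\frac{1}{k_1^{s_1}\cdots k_r^{s_r}}$ (an empty sum, equal to $0$, if $n<r$). *)

theory Defs
  imports Complex_Main
begin

text \<open>Index tuples 1 \<le> k_1 < ... < k_r \<le> n, represented 0-based as functions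
  k :: nat \<Rightarrow> nat with k i for i < r, and k i = 0 for i \<ge> r.\<close>
definition incr_tuples :: "nat \<Rightarrow> nat \<Rightarrow> (nat \<Rightarrow> nat) set" where
  "incr_tuples r n = {k. (\<forall>i<r. 1 \<le> k i \<and> k i \<le> n)
                        \<and> (\<forall>i. Suc i < r \<longrightarrow> k i < k (Suc i))
                        \<and> (\<forall>i\<ge>r. k i = 0)}"

text \<open>Multiple harmonic sum H_n(s_1,...,s_r); the list s has s ! (i-1) = s_i.\<close>
definition H :: "nat \<Rightarrow> nat list \<Rightarrow> real" where
  "H n s = (\<Sum>k\<in>incr_tuples (length s) n. \<Prod>i<length s. 1 / (real (k i) ^ (s ! i)))"

end

theory Submission
  imports Defs
begin

lemma incr_mono:
  assumes "k \<in> incr_tuples r n" "i \<le> j" "j < r"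
  shows "k i \<le> k j"
  using assms(2,3)
proof (induction j)
  case 0 then show ?case by simp
next
  case (Suc j)
  show ?case
  proof (cases "i = Suc j")
    case True then show ?thesis by simp
  next
    case False
    then have "i \<le> j" using Suc.prems by simp
    then have "k i \<le> k j" using Suc by simp
    moreover have "k j < k (Suc j)" using assms(1) Suc.prems unfolding incr_tuples_def by auto
    ultimately show ?thesis by simp
  qed
qed

lemma term_le:
  fixes s t :: "nat list" and l :: nat
  assumes len: "length t = length s"
    and sum: "sum_list s \<ge> sum_list t"
    and ll: "l < length s"
    and lo: "\<forall>i<l. s ! i \<le> t ! i"
    and hi: "\<forall>i. l \<le> i \<and> i < length s \<longrightarrow> s ! i \<ge> t ! i"
    and k: "k \<in> incr_tuples (length s) n"
  shows "(\<Prod>i<length s. k i ^ (t ! i)) \<le> (\<Prod>i<length s. k i ^ (s ! i))"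
proof -
  define r where "r = length s"
  define m where "m = k l"
  have m1: "1 \<le> m" using k ll unfolding m_def incr_tuples_def by auto
  have each: "k i ^ (t ! i) * m ^ (s ! i) \<le> k i ^ (s ! i) * m ^ (t ! i)" if "i < r" for i
  proof (cases "i < l")
    case True
    have ki: "k i \<le> m" unfolding m_def using incr_mono[OF k, of i l] True ll by simp
    have st: "s ! i \<le> t ! i" using lo True by simp
    have "k i ^ (t ! i) * m ^ (s ! i) = k i ^ (s ! i) * (k i ^ (t ! i - s ! i) * m ^ (s ! i))"
      using st by (metis le_add_diff_inverse mult.assoc power_add)
    also have "\<dots> \<le> k i ^ (s ! i) * (m ^ (t ! i - s ! i) * m ^ (s ! i))"
      using power_mono[OF ki, of "t ! i - s ! i"] by (intro mult_left_mono mult_right_mono) auto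
    also have "\<dots> = k i ^ (s ! i) * m ^ (t ! i)"
      using st by (metis le_add_diff_inverse2 power_add)
    finally show ?thesis .
  next
    case False
    have ki: "m \<le> k i" unfolding m_def using incr_mono[OF k, of l i] False that r_def by simp
    have st: "t ! i \<le> s ! i" using hi False that r_def by simp
    have "k i ^ (t ! i) * m ^ (s ! i) = k i ^ (t ! i) * (m ^ (t ! i) * m ^ (s ! i - t ! i))"
      using st by (metis le_add_diff_inverse power_add)
    also have "\<dots> \<le> k i ^ (t ! i) * (m ^ (t ! i) * k i ^ (s ! i - t ! i))"
      using power_mono[OF ki, of "s ! i - t ! i"] by (intro mult_left_mono) auto
    also have "\<dots> = k i ^ (s ! i) * m ^ (t ! i)"
      using st by (metis (no_types, lifting) le_add_diff_inverse mult.assoc mult.commute power_add)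
    finally show ?thesis .
  qed
  have "(\<Prod>i<r. k i ^ (t ! i) * m ^ (s ! i)) \<le> (\<Prod>i<r. k i ^ (s ! i) * m ^ (t ! i))"
    by (intro prod_mono) (use each in auto)
  moreover have "(\<Prod>i<r. m ^ (s ! i)) = m ^ sum_list s"
    by (simp add: power_sum sum_list_sum_nth r_def atLeast0LessThan)
  moreover have "(\<Prod>i<r. m ^ (t ! i)) = m ^ sum_list t"
    by (simp add: power_sum sum_list_sum_nth r_def atLeast0LessThan len)
  ultimately have A: "(\<Prod>i<r. k i ^ (t ! i)) * m ^ sum_list s \<le> (\<Prod>i<r. k i ^ (s ! i)) * m ^ sum_list t"
    by (simp add: prod.distrib)
  have "m ^ sum_list t \<le> m ^ sum_list s" using m1 sum by (simp add: power_increasing)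
  then have "(\<Prod>i<r. k i ^ (s ! i)) * m ^ sum_list t \<le> (\<Prod>i<r. k i ^ (s ! i)) * m ^ sum_list s"
    by simp
  with A have "(\<Prod>i<r. k i ^ (t ! i)) * m ^ sum_list s \<le> (\<Prod>i<r. k i ^ (s ! i)) * m ^ sum_list s"
    by linarith
  moreover have "0 < m ^ sum_list s" using m1 by simp
  ultimately show ?thesis unfolding r_def
    using mult_le_cancel2 by blast
qed

theorem lemma2:
  fixes s t :: "nat list" and l n :: nat
  assumes "length t = length s"
    and "\<forall>i<length s. 0 < s ! i" and "\<forall>i<length t. 0 < t ! i"
    and "sum_list s \<ge> sum_list t"
    and "1 \<le> length s" and "l \<le> length s - 1"
    and "\<forall>i<l. s ! i \<le> t ! i"
    and "\<forall>i. l \<le> i \<and> i < length s \<longrightarrow> s ! i \<ge> t ! i"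
    and "0 < n"
  shows "H n s \<le> H n t"
  unfolding H_def assms(1)
proof (rule sum_mono)
  fix k assume k: "k \<in> incr_tuples (length s) n"
  have pos: "\<forall>i<length s. 0 < k i" using k unfolding incr_tuples_def by auto
  have le: "(\<Prod>i<length s. k i ^ (t ! i)) \<le> (\<Prod>i<length s. k i ^ (s ! i))"
    using term_le[OF assms(1) assms(4) _ assms(7) assms(8) k] assms(5,6) by simp
  have le': "real (\<Prod>i<length s. k i ^ (t ! i)) \<le> real (\<Prod>i<length s. k i ^ (s ! i))"
    using le by linarith
  have p0: "0 < real (\<Prod>i<length s. k i ^ (t ! i))" using pos by (simp add: prod_pos del: of_nat_prod)
  have eq: "(\<Prod>i<length s. 1 / real (k i) ^ (u ! i)) = 1 / real (\<Prod>i<length s. k i ^ (u ! i))" for u :: "nat list"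
    by (simp add: prod_dividef)
  show "(\<Prod>i<length s. 1 / real (k i) ^ (s ! i)) \<le> (\<Prod>i<length s. 1 / real (k i) ^ (t ! i))"
    unfolding eq using le' p0 by (intro divide_left_mono) auto
qed

end
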